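(* Let $h>0$ and let $f:\mathbb R\to\mathbb R$ be a compactly supported $C^1$ function whose restriction to each interval $(ih,(i+1)h)$, $i\in\mathbb Z$, is a polynomial of degree at most $5$. Then $$\int_{\mathbb R} f(t)\,dt=\sum_{i\in\mathbb Z} h\Big(\tfrac{7}{15}\,f(ih)+\tfrac{8}{15}\,f\big(\tfrac{2i+1}{2}h\big)\Big).$$
   Context: This is the exact quadrature rule for $C^1$ quintic splines with uniform knots $h\mathbb Z$ on the whole real line (two nodes per subinterval: the knots and the midpoints). *)

theory Defs
  imports "HOL-Analysis.Analysis"
begin

definition C1_real :: "(real \<Rightarrow> real) \<Rightarrow> bool" where
  "C1_real f \<longleftrightarrow> (\<exists>f'. (\<forall>x. (f has_real_derivative f' x) (at x)) \<and> continuous_on UNIV f')"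

definition compact_support :: "(real \<Rightarrow> real) \<Rightarrow> bool" where
  "compact_support f \<longleftrightarrow> compact (closure {t. f t \<noteq> 0})"

definition piecewise_quintic :: "real \<Rightarrow> (real \<Rightarrow> real) \<Rightarrow> bool" where
  "piecewise_quintic h f \<longleftrightarrow>
     (\<forall>i::int. \<exists>c::nat \<Rightarrow> real. \<forall>t \<in> {of_int i * h <..< of_int (i + 1) * h}.
         f t = (\<Sum>k\<le>5. c k * t ^ k))"

end

theory Submission
  imports Defs
begin

lemma quint_alg:
  fixes a h c0 c1 c2 c3 c4 c5 :: real
  shows "(a+h)*c0 + (a+h)^2*c1/2 + (a+h)^3*c2/3 + (a+h)^4*c3/4 + (a+h)^5*c4/5 + (a+h)^6*c5/6
  - (a*c0 + a^2*c1/2 + a^3*c2/3 + a^4*c3/4 + a^5*c4/5 + a^6*c5/6)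
 = h*(7/30*(c0 + c1*a + c2*a^2 + c3*a^3+c4*a^4+c5*a^5) + 16/30*(c0 + c1*(a+h/2) + c2*(a+h/2)^2 + c3*(a+h/2)^3+c4*(a+h/2)^4+c5*(a+h/2)^5)
  + 7/30*(c0 + c1*(a+h) + c2*(a+h)^2 + c3*(a+h)^3+c4*(a+h)^4+c5*(a+h)^5))
  + h^2/60*((c1 + 2*c2*a + 3*c3*a^2 + 4*c4*a^3 + 5*c5*a^4) - (c1 + 2*c2*(a+h) + 3*c3*(a+h)^2 + 4*c4*(a+h)^3 + 5*c5*(a+h)^4))"
  by (simp add: field_simps power2_eq_square power3_eq_cube power4_eq_xxxx power_numeral_reduce)

lemma quint_rule:
  fixes f D :: "real \<Rightarrow> real" and c :: "nat \<Rightarrow> real"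
  assumes h: "h > 0" and fD: "\<And>x. (f has_real_derivative D x) (at x)"
    and cD: "continuous_on UNIV D"
    and eq: "\<forall>t\<in>{a<..<a+h}. f t = (\<Sum>k\<le>5. c k * t ^ k)"
  shows "(f has_integral (h*(7/30*f a + 16/30*f(a+h/2) + 7/30*f(a+h)) + h^2/60*(D a - D(a+h)))) {a..a+h}"
proof -
  define p where "p t = c 0 + c 1*t + c 2*t^2 + c 3*t^3+c 4*t^4+c 5*t^5" for t :: real
  define q where "q t = c 1 + 2*c 2*t + 3*c 3*t^2 + 4*c 4*t^3 + 5*c 5*t^4" for t :: real
  define P where "P t = t*c 0 + t^2*c 1/2 + t^3*c 2/3 + t^4*c 3/4 + t^5*c 4/5 + t^6*c 5/6" for t :: real
  have eq': "\<forall>t\<in>{a<..<a+h}. f t = p t"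
    using eq by (simp add: p_def numeral_eq_Suc)
  have dp: "(p has_real_derivative q t) (at t)" for t
    unfolding p_def q_def by (auto intro!: derivative_eq_intros simp: field_simps)
  have dP: "(P has_real_derivative p t) (at t)" for t
    unfolding p_def P_def by (auto intro!: derivative_eq_intros simp: field_simps)
  have cf: "continuous_on UNIV f"
    using fD by (meson DERIV_continuous continuous_at_imp_continuous_on)
  have cp: "continuous_on UNIV p"
    using dp by (meson DERIV_continuous continuous_at_imp_continuous_on)
  have cq: "continuous_on UNIV q"
    unfolding q_def by (intro continuous_intros)
  have cl: "closure {a<..<a+h} = {a..a+h}" using h by simp
  have fp: "\<forall>t\<in>{a..a+h}. f t = p t"
  proof -
    have "closed {t. f t = p t}"
      using cf cp by (intro closed_Collect_eq) (auto intro: continuous_on_subset)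
    hence "closure {a<..<a+h} \<subseteq> {t. f t = p t}"
      using eq' by (intro closure_minimal) auto
    thus ?thesis using cl by auto
  qed
  have Dq: "\<forall>t\<in>{a..a+h}. D t = q t"
  proof -
    have "\<forall>t\<in>{a<..<a+h}. D t = q t"
    proof
      fix t assume t: "t \<in> {a<..<a+h}"
      have "(p has_real_derivative D t) (at t)"
        by (rule has_field_derivative_transform_within_open[OF fD[of t] _ t]) (use eq' in auto)
      thus "D t = q t" using dp DERIV_unique by blast
    qed
    moreover have "closed {t. D t = q t}"
      using cD cq by (intro closed_Collect_eq) (auto intro: continuous_on_subset)
    ultimately have "closure {a<..<a+h} \<subseteq> {t. D t = q t}"
      by (intro closure_minimal) auto
    thus ?thesis using cl by auto
  qed
  have pint: "(p has_integral (P (a+h) - P a)) {a..a+h}"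
    using h dP by (intro fundamental_theorem_of_calculus)
      (auto simp: has_real_derivative_iff_has_vector_derivative[symmetric] intro: has_field_derivative_at_within)
  have I: "(f has_integral (P (a+h) - P a)) {a..a+h}"
    by (rule has_integral_eq[OF _ pint]) (use fp in auto)
  have "P (a+h) - P a = h*(7/30*p a + 16/30*p(a+h/2) + 7/30*p(a+h)) + h^2/60*(q a - q(a+h))"
    unfolding P_def p_def q_def by (rule quint_alg)
  also have "\<dots> = h*(7/30*f a + 16/30*f(a+h/2) + 7/30*f(a+h)) + h^2/60*(D a - D(a+h))"
    using fp Dq h by simp
  finally show ?thesis using I by simp
qed

theorem mainTheorem7:
  fixes h :: real and f :: "real \<Rightarrow> real"
  assumes "h > 0"
    and "C1_real f"
    and "compact_support f"
    and "piecewise_quintic h f"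
  shows "integral UNIV f =
    (\<Sum>\<^sub>\<infinity>i::int. h * (7/15 * f (of_int i * h) + 8/15 * f ((2 * of_int i + 1) / 2 * h)))"
proof -
  note h = assms(1)
  obtain D where fD: "\<And>x. (f has_real_derivative D x) (at x)" and cD: "continuous_on UNIV D"
    using assms(2) unfolding C1_real_def by blast
  obtain C :: "int \<Rightarrow> nat \<Rightarrow> real" where
    C: "\<And>i. \<forall>t \<in> {of_int i * h <..< of_int (i + 1) * h}. f t = (\<Sum>k\<le>5. C i k * t ^ k)"
    using assms(4) unfolding piecewise_quintic_def by metis
  have "bounded (closure {t. f t \<noteq> 0})"
    using assms(3) unfolding compact_support_def by (rule compact_imp_bounded)
  then obtain M where M: "\<And>t. t \<in> closure {t. f t \<noteq> 0} \<Longrightarrow> norm t \<le> M"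
    unfolding bounded_iff by blast
  have fz: "f t = 0" if "\<bar>t\<bar> > M" for t
    using M[of t] closure_subset that by force
  have Dz: "D t = 0" if t: "\<bar>t\<bar> > M" for t
  proof -
    have "open {x::real. M < \<bar>x\<bar>}" by (intro open_Collect_less continuous_intros)
    have "((\<lambda>_. 0) has_real_derivative D t) (at t)"
      by (rule has_field_derivative_transform_within_open[OF fD[of t] \<open>open _\<close>])
         (use t fz in auto)
    moreover have "((\<lambda>_. 0::real) has_real_derivative 0) (at t)" by simp
    ultimately show ?thesis using DERIV_unique by blast
  qed
  obtain N :: nat where N: "M / h + 1 < real N" using reals_Archimedean2 by blast
  have NhM: "real N * h > M + h"
    using N h by (simp add: field_simps)
  define a where "a k = (real k - real N) * h" for k :: nat
  define R where "R k = h*(7/30*f (a k) + 16/30*f(a k+h/2) + 7/30*f(a k+h)) + h^2/60*(D (a k) - D(a k+h))" for k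
  have aS: "a (Suc k) = a k + h" for k unfolding a_def by (simp add: algebra_simps)
  have piece: "(f has_integral R k) {a k..a (Suc k)}" for k
  proof -
    have e1: "of_int (int k - int N) * h = a k" unfolding a_def by simp
    have e2: "of_int (int k - int N + 1) * h = a k + h" unfolding a_def by (simp add: algebra_simps)
    show ?thesis unfolding R_def aS
      by (rule quint_rule[OF h fD cD, of "a k" "C (int k - int N)"]) (use C[of "int k - int N", unfolded e1 e2] in blast)
  qed
  have ind: "(f has_integral (\<Sum>j<n. R j)) {a 0..a n}" for n
  proof (induction n)
    case 0 then show ?case by (simp add: has_integral_refl)
  next
    case (Suc n)
    have "a 0 \<le> a n" unfolding a_def using h by (intro mult_right_mono) auto
    moreover have "a n \<le> a (Suc n)" using aS h by simp
    ultimately show ?case using has_integral_combine[OF _ _ Suc.IH piece[of n]] by (simp add: add.commute)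
  qed
  have a0: "a 0 = - (real N * h)" and a2: "a (2*N) = real N * h" unfolding a_def by (simp_all add: algebra_simps)
  have "(f has_integral (\<Sum>j<2*N. R j)) {a 0..a (2*N)}" by (rule ind)
  hence "((\<lambda>x. if x \<in> {a 0..a (2*N)} then f x else 0) has_integral (\<Sum>j<2*N. R j)) UNIV"
    by (simp only: has_integral_restrict_UNIV)
  moreover have "(\<lambda>x. if x \<in> {a 0..a (2*N)} then f x else 0) = f"
  proof
    fix x show "(if x \<in> {a 0..a (2*N)} then f x else 0) = f x"
      using fz[of x] NhM h unfolding a0 a2 by auto
  qed
  ultimately have I: "integral UNIV f = (\<Sum>j<2*N. R j)" by (simp add: integral_unique)
  define T where "T j = h * (7/15 * f (a j) + 8/15 * f (a j + h/2))" for j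
  have RT: "R j = T j + 7/30*h*(f (a (Suc j)) - f (a j)) - h^2/60*(D (a (Suc j)) - D (a j))" for j
    unfolding R_def T_def aS by (simp add: field_simps)
  have fe: "f (a 0) = 0" "f (a (2*N)) = 0" "D (a 0) = 0" "D (a (2*N)) = 0"
    using fz Dz NhM h unfolding a0 a2 by auto
  have "(\<Sum>j<2*N. R j) = (\<Sum>j<2*N. T j) + (\<Sum>j<2*N. 7/30*h*(f (a (Suc j)) - f (a j)))
      - (\<Sum>j<2*N. h^2/60*(D (a (Suc j)) - D (a j)))"
    unfolding RT by (simp only: sum.distrib sum_subtractf)
  also have "\<dots> = (\<Sum>j<2*N. T j) + 7/30*h*(\<Sum>j<2*N. f (a (Suc j)) - f (a j))
      - h^2/60*(\<Sum>j<2*N. D (a (Suc j)) - D (a j))"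
    by (simp only: sum_distrib_left)
  also have "\<dots> = (\<Sum>j<2*N. T j)"
    using sum_lessThan_telescope[of "\<lambda>n. f (a n)" "2*N"] sum_lessThan_telescope[of "\<lambda>n. D (a n)" "2*N"] fe
    by simp
  finally have I2: "integral UNIV f = (\<Sum>j<2*N. T j)" using I by simp
  define g where "g i = h * (7/15 * f (of_int i * h) + 8/15 * f ((2 * of_int i + 1) / 2 * h))" for i :: int
  have gz: "g i = 0" if "i \<notin> {- int N..<int N}" for i
  proof (cases "i \<ge> int N")
    case True
    have "of_int i * h \<ge> real N * h" using True h by (intro mult_right_mono) auto
    moreover have "(2 * of_int i + 1) / 2 * h \<ge> real N * h" using True h
      by (intro mult_right_mono) auto
    ultimately have "f (of_int i * h) = 0" "f ((2 * of_int i + 1) / 2 * h) = 0"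
      using NhM h by (intro fz; linarith)+
    thus ?thesis unfolding g_def by simp
  next
    case False
    hence i: "i \<le> - int N - 1" using that by auto
    have "of_int i * h \<le> (- real N - 1) * h" using i h by (intro mult_right_mono) auto
    moreover have "(2 * of_int i + 1) / 2 * h \<le> (- real N - 1/2) * h" using i h
      by (intro mult_right_mono) auto
    moreover have "(- real N - 1) * h < - M" "(- real N - 1/2) * h < - M"
      using NhM h by (simp_all add: algebra_simps)
    ultimately have "f (of_int i * h) = 0" "f ((2 * of_int i + 1) / 2 * h) = 0"
      by (intro fz; linarith)+
    thus ?thesis unfolding g_def by simp
  qed
  have "(\<Sum>\<^sub>\<infinity>i::int. g i) = (\<Sum>\<^sub>\<infinity>i\<in>{- int N..<int N}. g i)"
    by (rule infsum_cong_neutral) (use gz in auto)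
  also have "\<dots> = (\<Sum>i\<in>{- int N..<int N}. g i)" by simp
  also have "\<dots> = (\<Sum>j<2*N. T j)"
  apply (rule sum.reindex_bij_witness[where i = "\<lambda>j. int j - int N" and j = "\<lambda>i. nat (i + int N)"])
    apply (auto simp: g_def T_def a_def field_simps)
    done
  finally show ?thesis unfolding I2 g_def by simp
qed

end
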